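(* Let $n\ge 2$, let $A$ be a set of $n$ agents, and let $v$ assign a real value $v(C)$ to every nonempty $C\subseteq A$. Let $S_1,S_2\subseteq\{2,\dots,n\}$ be two coalition size sets, each containing $n$. Suppose that every integer partition of $n$ is reachable from the node $[n]$ in $G_{S_1}$ or in $G_{S_2}$ (i.e., for every integer partition $P$ of $n$ there is $i\in\{1,2\}$ and a directed path from $[n]$ to $P$ in $G_{S_i}$). Then $$\max\big(V^{S_1}(A),\,V^{S_2}(A)\big)\;=\;\max_{\mathcal{CS}\in\Pi(A)}\ \sum_{C\in\mathcal{CS}} v(C),$$ i.e., the CDP procedure run with the pair $(S_1,S_2)$ returns the value of an optimal coalition structure.
   Context: A coalition structure of $A$ is a partition of $A$ into nonempty pairwise disjoint coalitions; $\Pi(A)$ is the set of all coalition structures, and the value of $\mathcal{CS}$ is $\sum_{C\in\mathcal{CS}}v(C)$. Restricted integer partition graph: for a set $S\subseteq\{2,\dots,n\}$, $G_S$ is the directed graph whose nodes are the integer partitions of $n$ (multisets of positive integers summing to $n$), with an edge from $P$ to $P'$ whenever $P'$ is obtained from $P$ by replacing a single part $x$ of $P$ with $x\in S$ by two positive parts $x_1,x_2$ with $x_1+x_2=x$. The node $[n]$ is the partition with one part. Dynamic program with size set $S$: initialize a table $V_t(C)=v(C)$ for every nonempty $C\subseteq A$. Then, for each $s\in S$ in increasing order, for each coalition $C\subseteq A$ with $|C|=s$, and for each unordered pair $\{C_1,C_2\}$ of nonempty disjoint sets with $C_1\cup C_2=C$, set $V_t(C)\leftarrow\max\big(V_t(C),\,V_t(C_1)+V_t(C_2)\big)$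 (using the current table values). Let $V^{S}(A)$ denote the final value of $V_t(A)$ after this procedure. CDP runs this program separately (with fresh tables) for $S_1$ and for $S_2$ and returns the larger of $V^{S_1}(A)$ and $V^{S_2}(A)$. *)

theory Defs
  imports Complex_Main "HOL-Library.Multiset" "HOL-Library.Disjoint_Sets"
begin

definition int_partition :: "nat \<Rightarrow> nat multiset \<Rightarrow> bool" where
  "int_partition n P \<longleftrightarrow> 0 \<notin># P \<and> sum_mset P = n"

definition G_edge :: "nat set \<Rightarrow> nat multiset \<Rightarrow> nat multiset \<Rightarrow> bool" where
  "G_edge S P P' \<longleftrightarrow> (\<exists>x x1 x2. x \<in># P \<and> x \<in> S \<and> 0 < x1 \<and> 0 < x2 \<and> x1 + x2 = x
                        \<and> P' = P - {#x#} + {#x1, x2#})"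

definition G_reach :: "nat \<Rightarrow> nat set \<Rightarrow> nat multiset \<Rightarrow> nat multiset \<Rightarrow> bool" where
  "G_reach n S = (\<lambda>P P'. int_partition n P \<and> int_partition n P' \<and> G_edge S P P')\<^sup>*\<^sup>*"

(* Parts have strictly smaller size, so they are not modified during this round;
   hence a simultaneous update is the same as the sequential one. *)
definition dp_round :: "nat \<Rightarrow> ('a set \<Rightarrow> real) \<Rightarrow> ('a set \<Rightarrow> real)" where
  "dp_round s f = (\<lambda>C. if card C = s
      then Max ({f C} \<union> {f C1 + f (C - C1) | C1. C1 \<subseteq> C \<and> C1 \<noteq> {} \<and> C1 \<noteq> C})
      else f C)"

definition dp_table :: "nat set \<Rightarrow> ('a set \<Rightarrow> real) \<Rightarrow> ('a set \<Rightarrow> real)" where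
  "dp_table S v = foldl (\<lambda>f s. dp_round s f) v (sorted_list_of_set S)"

definition dp_value :: "nat set \<Rightarrow> ('a set \<Rightarrow> real) \<Rightarrow> 'a set \<Rightarrow> real" where
  "dp_value S v A = dp_table S v A"

definition cs_value :: "('a set \<Rightarrow> real) \<Rightarrow> 'a set set \<Rightarrow> real" where
  "cs_value v CS = (\<Sum>C\<in>CS. v C)"

end

theory Submission
  imports Defs
begin


lemma round_fin: "finite C \<Longrightarrow> finite ({f C} \<union> {f C1 + f (C - C1) | C1. C1 \<subseteq> C \<and> C1 \<noteq> {} \<and> C1 \<noteq> C})"
proof -
  assume "finite C"
  have "{f C1 + f (C - C1) | C1. C1 \<subseteq> C \<and> C1 \<noteq> {} \<and> C1 \<noteq> C} \<subseteq> (\<lambda>C1. f C1 + f (C - C1)) ` Pow C" by auto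
  then show ?thesis using \<open>finite C\<close> by (meson finite_Pow_iff finite_Un finite_imageI finite_insert finite.emptyI finite_subset)
qed

lemma round_mono: "finite C \<Longrightarrow> dp_round s f C \<ge> f C"
  unfolding dp_round_def using round_fin[of C f] by (auto intro: Max_ge)

lemma round_split: "finite C \<Longrightarrow> card C = s \<Longrightarrow> C1 \<subseteq> C \<Longrightarrow> C1 \<noteq> {} \<Longrightarrow> C1 \<noteq> C
   \<Longrightarrow> dp_round s f C \<ge> f C1 + f (C - C1)"
  unfolding dp_round_def using round_fin[of C f] by (auto intro!: Max_ge)

lemma round_other: "card C \<noteq> s \<Longrightarrow> dp_round s f C = f C"
  unfolding dp_round_def by auto

lemma fold_mono: "finite C \<Longrightarrow> foldl (\<lambda>f s. dp_round s f) f L C \<ge> f C"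
proof (induction L arbitrary: f)
  case Nil then show ?case by simp
next
  case (Cons a L)
  then show ?case using round_mono[where C=C and s=a and f=f] by (simp, meson order_trans)
qed

lemma fold_other: "card C \<notin> set L \<Longrightarrow> foldl (\<lambda>f s. dp_round s f) f L C = f C"
  by (induction L arbitrary: f) (auto simp: round_other)

lemma fold_split:
  assumes "sorted L" "distinct L" "card C \<in> set L" "finite C" "C1 \<subseteq> C" "C1 \<noteq> {}" "C1 \<noteq> C"
  shows "foldl (\<lambda>f s. dp_round s f) f L C \<ge> foldl (\<lambda>f s. dp_round s f) f L C1
           + foldl (\<lambda>f s. dp_round s f) f L (C - C1)"
proof -
  let ?g = "\<lambda>f s. dp_round s f"
  obtain L1 L2 where L: "L = L1 @ card C # L2" using assms(3) by (meson split_list)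
  have gt: "\<forall>x\<in>set L2. card C < x" using assms(1,2) L
    by (auto simp: sorted_append) (metis le_neq_implies_less)
  have c1: "card C1 < card C" using assms by (meson psubsetI psubset_card_mono)
  have c2: "card (C - C1) < card C" using assms
  proof -
    have "finite C1" using assms finite_subset by blast
    then have "card C1 > 0" using assms by auto
    then show ?thesis using assms card_Diff_subset[of C1 C] \<open>finite C1\<close> card_mono[of C C1] by simp
  qed
  define F1 where "F1 = foldl ?g f L1"
  have eqC: "foldl ?g f L C = dp_round (card C) F1 C"
  proof -
    have "card C \<notin> set L2" using gt by auto
    then show ?thesis using fold_other[of C L2 "dp_round (card C) F1"] by (simp add: L F1_def)
  qed
  have eq1: "foldl ?g f L C1 = F1 C1"
  proof -
    have "card C1 \<notin> set (card C # L2)" using gt c1 by auto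
    then show ?thesis using fold_other[of C1 "card C # L2" F1] by (simp add: L F1_def)
  qed
  have eq2: "foldl ?g f L (C - C1) = F1 (C - C1)"
  proof -
    have "card (C - C1) \<notin> set (card C # L2)" using gt c2 by auto
    then show ?thesis using fold_other[of "C - C1" "card C # L2" F1] by (simp add: L F1_def)
  qed
  show ?thesis using eqC eq1 eq2 round_split[of C "card C" C1 F1] assms by simp
qed



definition achv :: "('a set \<Rightarrow> real) \<Rightarrow> 'a set \<Rightarrow> real set" where
  "achv v C = {cs_value v CS | CS. partition_on C CS}"

lemma achv_union:
  assumes "a \<in> achv v C1" "b \<in> achv v C2" "C1 \<inter> C2 = {}" "finite C1" "finite C2"
  shows "a + b \<in> achv v (C1 \<union> C2)"
proof -
  obtain P1 where P1: "partition_on C1 P1" "a = cs_value v P1" using assms(1) by (auto simp: achv_def)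
  obtain P2 where P2: "partition_on C2 P2" "b = cs_value v P2" using assms(2) by (auto simp: achv_def)
  have U1: "\<Union>P1 = C1" and U2: "\<Union>P2 = C2" using P1 P2 by (auto simp: partition_on_def)
  have E1: "{} \<notin> P1" and E2: "{} \<notin> P2" using P1 P2 by (auto simp: partition_on_def)
  have D1: "disjoint P1" and D2: "disjoint P2" using P1 P2 by (auto simp: partition_on_def)
  have dj: "P1 \<inter> P2 = {}"
  proof (rule ccontr)
    assume "P1 \<inter> P2 \<noteq> {}"
    then obtain X where X: "X \<in> P1" "X \<in> P2" by auto
    then have "X \<subseteq> C1" "X \<subseteq> C2" "X \<noteq> {}" using U1 U2 E1 by auto
    then show False using assms(3) by auto
  qed
  have pu: "partition_on (C1 \<union> C2) (P1 \<union> P2)"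
  proof (rule partition_onI)
    show "\<Union>(P1 \<union> P2) = C1 \<union> C2" using U1 U2 by auto
    show "{} \<notin> P1 \<union> P2" using E1 E2 by auto
    fix p q assume pq: "p \<in> P1 \<union> P2" "q \<in> P1 \<union> P2" "p \<noteq> q"
    show "disjnt p q"
    proof -
      { assume "p \<in> P1" "q \<in> P1" then have ?thesis using D1 pq(3) by (simp add: pairwise_def disjoint_def disjnt_def) }
      moreover { assume "p \<in> P2" "q \<in> P2" then have ?thesis using D2 pq(3) by (simp add: pairwise_def disjoint_def disjnt_def) }
      moreover { assume "p \<in> P1" "q \<in> P2" then have "p \<subseteq> C1" "q \<subseteq> C2" using U1 U2 by auto
        then have ?thesis using assms(3) by (auto simp: disjnt_def) }
      moreover { assume "p \<in> P2" "q \<in> P1" then have "p \<subseteq> C2" "q \<subseteq> C1" using U1 U2 by auto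
        then have ?thesis using assms(3) by (auto simp: disjnt_def) }
      ultimately show ?thesis using pq by blast
    qed
  qed
  have "finite P1" "finite P2" using P1 P2 assms finite_elements by blast+
  then have "cs_value v (P1 \<union> P2) = a + b" using P1 P2 dj by (simp add: cs_value_def sum.union_disjoint)
  then show ?thesis using pu unfolding achv_def by (metis (mono_tags, lifting) mem_Collect_eq)
qed

lemma round_achv:
  assumes "\<forall>C. finite C \<and> C \<noteq> {} \<longrightarrow> f C \<in> achv v C"
  shows "\<forall>C. finite C \<and> C \<noteq> {} \<longrightarrow> dp_round s f C \<in> achv v C"
proof (intro allI impI)
  fix C :: "'a set" assume C: "finite C \<and> C \<noteq> {}"
  show "dp_round s f C \<in> achv v C"
  proof (cases "card C = s")
    case False then show ?thesis using assms C by (simp add: round_other)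
  next
    case True
    let ?M = "{f C} \<union> {f C1 + f (C - C1) | C1. C1 \<subseteq> C \<and> C1 \<noteq> {} \<and> C1 \<noteq> C}"
    have "Max ?M \<in> ?M" using round_fin[of C f] C by (intro Max_in) auto
    moreover have "?M \<subseteq> achv v C"
    proof
      fix x assume "x \<in> ?M"
      then show "x \<in> achv v C"
      proof
        assume "x \<in> {f C}" then show ?thesis using assms C by auto
      next
        assume "x \<in> {f C1 + f (C - C1) | C1. C1 \<subseteq> C \<and> C1 \<noteq> {} \<and> C1 \<noteq> C}"
        then obtain C1 where C1: "C1 \<subseteq> C" "C1 \<noteq> {}" "C1 \<noteq> C" "x = f C1 + f (C - C1)" by blast
        have f1: "finite C1" using C C1 finite_subset by blast
        have "C - C1 \<noteq> {}" using C1 by blast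
        then have "f C1 + f (C - C1) \<in> achv v (C1 \<union> (C - C1))"
          using achv_union[of "f C1" v C1 "f (C - C1)" "C - C1"] assms C C1 f1 by auto
        moreover have "C1 \<union> (C - C1) = C" using C1 by blast
        ultimately show ?thesis using C1 by simp
      qed
    qed
    ultimately have "Max ?M \<in> achv v C" by blast
    moreover have "dp_round s f C = Max ?M" using True by (simp add: dp_round_def)
    ultimately show ?thesis by simp
  qed
qed

lemma fold_achv:
  assumes "\<forall>C. finite C \<and> C \<noteq> {} \<longrightarrow> f C \<in> achv v C"
  shows "\<forall>C. finite C \<and> C \<noteq> {} \<longrightarrow> foldl (\<lambda>f s. dp_round s f) f L C \<in> achv v C"
  using assms
proof (induction L arbitrary: f)
  case Nil then show ?case by simp
next
  case (Cons a L)
  have "\<forall>C. finite C \<and> C \<noteq> {} \<longrightarrow> dp_round a f C \<in> achv v C" by (rule round_achv[OF Cons.prems])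
  from Cons.IH[OF this] show ?case by simp
qed

lemma table_achv:
  assumes "finite C" "C \<noteq> {}"
  shows "dp_value S v C \<in> achv v C"
proof -
  have "\<forall>C. finite C \<and> C \<noteq> {} \<longrightarrow> v C \<in> achv v C"
  proof (intro allI impI)
    fix C :: "'a set" assume "finite C \<and> C \<noteq> {}"
    then have "partition_on C {C}" by (simp add: partition_on_space)
    moreover have "cs_value v {C} = v C" by (simp add: cs_value_def)
    ultimately show "v C \<in> achv v C" unfolding achv_def by force
  qed
  then show ?thesis using fold_achv assms unfolding dp_value_def dp_table_def by blast
qed



definition sizes :: "'a set set \<Rightarrow> nat multiset" where
  "sizes CS = image_mset card (mset_set CS)"

lemma merge_partition:
  assumes P: "partition_on A CS'" and B: "B1 \<in> CS'" "B2 \<in> CS'" "B1 \<noteq> B2"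
  shows "partition_on A (insert (B1 \<union> B2) (CS' - {B1, B2}))"
    and "B1 \<union> B2 \<notin> CS' - {B1, B2}" and "B1 \<inter> B2 = {}"
proof -
  have U: "\<Union>CS' = A" and E: "{} \<notin> CS'" and D: "disjoint CS'" using P by (auto simp: partition_on_def)
  have DD: "\<And>p q. p \<in> CS' \<Longrightarrow> q \<in> CS' \<Longrightarrow> p \<noteq> q \<Longrightarrow> p \<inter> q = {}"
    using D by (auto simp: disjoint_def)
  show dj: "B1 \<inter> B2 = {}" using DD B by blast
  show nin: "B1 \<union> B2 \<notin> CS' - {B1, B2}"
  proof
    assume "B1 \<union> B2 \<in> CS' - {B1, B2}"
    then have "B1 \<union> B2 \<in> CS'" "B1 \<union> B2 \<noteq> B1" by auto
    then have "(B1 \<union> B2) \<inter> B1 = {}" using DD B by blast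
    moreover have "B1 \<noteq> {}" using E B by auto
    ultimately show False by auto
  qed
  show "partition_on A (insert (B1 \<union> B2) (CS' - {B1, B2}))"
  proof (rule partition_onI)
    show "\<Union>(insert (B1 \<union> B2) (CS' - {B1, B2})) = A" using U B by auto
    show "{} \<notin> insert (B1 \<union> B2) (CS' - {B1, B2})" using E B by auto
    fix p q assume pq: "p \<in> insert (B1 \<union> B2) (CS' - {B1, B2})" "q \<in> insert (B1 \<union> B2) (CS' - {B1, B2})" "p \<noteq> q"
    show "disjnt p q"
    proof (cases "p = B1 \<union> B2")
      case True
      then have q: "q \<in> CS'" "q \<noteq> B1" "q \<noteq> B2" using pq by auto
      then show ?thesis using DD[of q B1] DD[of q B2] B True by (auto simp: disjnt_def)
    next
      case False
      then have p: "p \<in> CS'" "p \<noteq> B1" "p \<noteq> B2" using pq by auto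
      show ?thesis
      proof (cases "q = B1 \<union> B2")
        case True
        then show ?thesis using DD[of p B1] DD[of p B2] B p by (auto simp: disjnt_def)
      next
        case False
        then have "q \<in> CS'" using pq by auto
        then show ?thesis using DD[of p q] p pq(3) by (auto simp: disjnt_def)
      qed
    qed
  qed
qed

lemma reach_bound:
  fixes T :: "'a set \<Rightarrow> real"
  assumes R: "G_reach n S {#n#} Q" and fA: "finite A" and cA: "card A = n"
    and sup: "\<And>C C1. finite C \<Longrightarrow> card C \<in> S \<Longrightarrow> C1 \<subseteq> C \<Longrightarrow> C1 \<noteq> {} \<Longrightarrow> C1 \<noteq> C
               \<Longrightarrow> T C \<ge> T C1 + T (C - C1)"
  shows "\<forall>CS. partition_on A CS \<and> sizes CS = Q \<longrightarrow> T A \<ge> (\<Sum>C\<in>CS. T C)"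
  using R unfolding G_reach_def
proof (induction rule: rtranclp_induct)
  case base
  show ?case
  proof (intro allI impI)
    fix CS assume H: "partition_on A CS \<and> sizes CS = {#n#}"
    have fin: "finite CS" using H fA finite_elements by blast
    have "size (mset_set CS) = 1" using H unfolding sizes_def by (metis size_image_mset size_single)
    then have "card CS = 1" by simp
    then obtain B where "CS = {B}" by (auto simp: card_1_singleton_iff)
    moreover then have "B = A" using H by (auto simp: partition_on_def)
    ultimately show "T A \<ge> (\<Sum>C\<in>CS. T C)" by simp
  qed
next
  case (step Q Q')
  have IH: "\<And>CS. partition_on A CS \<Longrightarrow> sizes CS = Q \<Longrightarrow> T A \<ge> (\<Sum>C\<in>CS. T C)" using step.IH by blast
  obtain x x1 x2 where e: "x \<in># Q" "x \<in> S" "0 < x1" "0 < x2" "x1 + x2 = x"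
      "Q' = Q - {#x#} + {#x1, x2#}" using step.hyps(2) unfolding G_edge_def by blast
  show ?case
  proof (intro allI impI)
    fix CS' assume H: "partition_on A CS' \<and> sizes CS' = Q'"
    have fin: "finite CS'" using H fA finite_elements by blast
    have "x1 \<in># Q'" using e by simp
    then obtain B1 where B1: "B1 \<in> CS'" "card B1 = x1" using H fin unfolding sizes_def by auto
    have s1: "sizes (CS' - {B1}) = Q' - {#x1#}"
      using fin B1 unfolding sizes_def H[THEN conjunct2, symmetric, unfolded sizes_def]
      by (simp add: mset_set_Diff image_mset_Diff)
    have "x2 \<in># Q' - {#x1#}" using e by simp
    then have "x2 \<in># image_mset card (mset_set (CS' - {B1}))" using s1 unfolding sizes_def by simp
    then obtain B2 where "B2 \<in># mset_set (CS' - {B1})" "card B2 = x2" by auto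
    then have B2: "B2 \<in> CS' - {B1}" "card B2 = x2" using fin by auto
    have B2': "B2 \<in> CS'" "B1 \<noteq> B2" using B2 by auto
    note mp = merge_partition[OF H[THEN conjunct1] B1(1) B2']
    define R where "R = CS' - {B1, B2}"
    have finR: "finite R" using fin R_def by simp
    have "mset_set R = mset_set CS' - {#B1, B2#}"
      using fin B1 B2' unfolding R_def by (simp add: mset_set_Diff)
    moreover have sub: "{#B1, B2#} \<subseteq># mset_set CS'"
    proof -
      have "mset_set {B1, B2} \<subseteq># mset_set CS'" using fin B1 B2' by (intro subset_imp_msubset_mset_set) auto
      then show ?thesis using B2' by simp
    qed
    ultimately have sR: "sizes R = Q' - {#x1, x2#}"
      using H B1 B2 unfolding sizes_def by (simp add: image_mset_Diff[OF sub])
    have sR2: "sizes R = Q - {#x#}" using sR e by simp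
    have fB: "finite B1" "finite B2" using B1 B2' H fA by (auto simp: partition_on_def intro: finite_subset)
    have cU: "card (B1 \<union> B2) = x" using mp(3) fB B1 B2 e by (simp add: card_Un_disjoint)
    have sCS: "sizes (insert (B1 \<union> B2) R) = Q"
      using finR mp(2) sR2 cU e(1) unfolding sizes_def R_def by simp
    have a1: "T A \<ge> (\<Sum>C\<in>insert (B1 \<union> B2) R. T C)" using IH mp(1) sCS R_def by simp
    have a2: "(\<Sum>C\<in>insert (B1 \<union> B2) R. T C) = T (B1 \<union> B2) + (\<Sum>C\<in>R. T C)"
      using finR mp(2) R_def by simp
    have "B1 \<noteq> {}" "B2 \<noteq> {}" using H B1 B2' by (auto simp: partition_on_def)
    then have "T (B1 \<union> B2) \<ge> T B1 + T ((B1 \<union> B2) - B1)"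
      using sup[of "B1 \<union> B2" B1] fB cU e mp(3) by auto
    moreover have "(B1 \<union> B2) - B1 = B2" using mp(3) by auto
    ultimately have a3: "T (B1 \<union> B2) \<ge> T B1 + T B2" by simp
    have eqC: "CS' = insert B1 (insert B2 R)" using B1 B2' R_def by auto
    have nR: "B1 \<notin> R" "B2 \<notin> R" using R_def by auto
    have "(\<Sum>C\<in>insert B1 (insert B2 R). T C) = T B1 + T B2 + (\<Sum>C\<in>R. T C)"
      using finR B2' nR by simp
    then have a4: "(\<Sum>C\<in>CS'. T C) = T B1 + T B2 + (\<Sum>C\<in>R. T C)" using eqC by simp
    show "T A \<ge> (\<Sum>C\<in>CS'. T C)" using a1 a2 a3 a4 by linarith
  qed
qed



lemma table_ge_v: "finite C \<Longrightarrow> dp_table S v C \<ge> v C"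
  unfolding dp_table_def by (rule fold_mono)

lemma table_sup:
  assumes "finite S" "finite C" "card C \<in> S" "C1 \<subseteq> C" "C1 \<noteq> {}" "C1 \<noteq> C"
  shows "dp_table S v C \<ge> dp_table S v C1 + dp_table S v (C - C1)"
  unfolding dp_table_def using assms by (intro fold_split) auto

lemma lower:
  assumes fA: "finite A" and cA: "card A = n" and fS: "finite S"
    and R: "G_reach n S {#n#} (sizes CS)" and P: "partition_on A CS"
  shows "dp_value S v A \<ge> cs_value v CS"
proof -
  have "\<forall>CS'. partition_on A CS' \<and> sizes CS' = sizes CS \<longrightarrow> dp_table S v A \<ge> (\<Sum>C\<in>CS'. dp_table S v C)"
    by (rule reach_bound[OF R fA cA]) (rule table_sup[OF fS])
  then have "dp_table S v A \<ge> (\<Sum>C\<in>CS. dp_table S v C)" using P by blast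
  moreover have "(\<Sum>C\<in>CS. dp_table S v C) \<ge> (\<Sum>C\<in>CS. v C)"
  proof (rule sum_mono)
    fix C assume "C \<in> CS"
    then have "finite C" using P fA by (auto simp: partition_on_def intro: finite_subset)
    then show "dp_table S v C \<ge> v C" by (rule table_ge_v)
  qed
  ultimately show ?thesis unfolding dp_value_def cs_value_def by linarith
qed

lemma sizes_part:
  assumes fA: "finite A" and cA: "card A = n" and P: "partition_on A CS"
  shows "int_partition n (sizes CS)"
proof -
  have fin: "finite CS" using P fA finite_elements by blast
  have fC: "\<And>C. C \<in> CS \<Longrightarrow> finite C" using P fA by (auto simp: partition_on_def intro: finite_subset)
  have ne: "\<And>C. C \<in> CS \<Longrightarrow> C \<noteq> {}" using P by (auto simp: partition_on_def)
  have "0 \<notin># sizes CS"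
  proof
    assume "0 \<in># sizes CS"
    then obtain C where "C \<in># mset_set CS" "card C = 0" unfolding sizes_def by auto
    then have "C \<in> CS" "card C = 0" using fin by auto
    then show False using fC ne by auto
  qed
  moreover have "sum_mset (sizes CS) = n"
  proof -
    have "sum_mset (sizes CS) = sum card CS" unfolding sizes_def by (simp add: sum_unfold_sum_mset)
    also have "\<dots> = card (\<Union>CS)"
      using P fC by (intro card_Union_disjoint[symmetric]) (auto simp: partition_on_def disjoint_def pairwise_def)
    also have "\<dots> = n" using P cA by (simp add: partition_on_def)
    finally show ?thesis .
  qed
  ultimately show ?thesis unfolding int_partition_def by simp
qed

theorem theorem1:
  fixes A :: "'a set" and v :: "'a set \<Rightarrow> real" and n :: nat and S1 S2 :: "nat set"
  assumes "finite A" and "card A = n" and "n \<ge> 2"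
    and "S1 \<subseteq> {2..n}" and "n \<in> S1"
    and "S2 \<subseteq> {2..n}" and "n \<in> S2"
    and "\<forall>P. int_partition n P \<longrightarrow> G_reach n S1 {#n#} P \<or> G_reach n S2 {#n#} P"
  shows "max (dp_value S1 v A) (dp_value S2 v A)
           = Max {cs_value v CS | CS. partition_on A CS}"
proof -
  let ?M = "{cs_value v CS | CS. partition_on A CS}"
  have Ane: "A \<noteq> {}" using assms(1,2,3) by auto
  have M: "?M = achv v A" by (simp add: achv_def)
  have finM: "finite ?M"
  proof -
    have "?M = cs_value v ` {CS. partition_on A CS}" by auto
    then show ?thesis using finitely_many_partition_on[OF assms(1)] by simp
  qed
  have neM: "?M \<noteq> {}" using partition_on_space[OF Ane] by auto
  have "Max ?M \<in> ?M" using finM neM by (rule Max_in)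
  then obtain CS where CS: "partition_on A CS" "Max ?M = cs_value v CS" by auto
  have fS1: "finite S1" using assms(4) finite_subset by blast
  have fS2: "finite S2" using assms(6) finite_subset by blast
  have u1: "dp_value S1 v A \<le> Max ?M" using table_achv[OF assms(1) Ane, of S1 v] M finM by (simp add: Max_ge)
  have u2: "dp_value S2 v A \<le> Max ?M" using table_achv[OF assms(1) Ane, of S2 v] M finM by (simp add: Max_ge)
  have "int_partition n (sizes CS)" using sizes_part[OF assms(1,2) CS(1)] .
  then have "G_reach n S1 {#n#} (sizes CS) \<or> G_reach n S2 {#n#} (sizes CS)" using assms(8) by blast
  then have "dp_value S1 v A \<ge> Max ?M \<or> dp_value S2 v A \<ge> Max ?M"
    using lower[OF assms(1,2) fS1 _ CS(1), of v] lower[OF assms(1,2) fS2 _ CS(1), of v] CS(2) by auto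
  then show ?thesis using u1 u2 by linarith
qed

end
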